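(* Let $X=\begin{pmatrix}0&u\sqrt\epsilon\\ v\sqrt\epsilon&0\end{pmatrix}$ with $u,v\in F$, $\nu(u)=0$ and $\nu(v)>0$. Let $s>0$ and $k\in\mathcal{K}$. Then $k^{-1}Xk\in X+\mathfrak{k}_s$ if and only if $k=cg$ for some $c\in T(X)$ and $g\in\mathcal{K}_s$.
   Context: $F$ non-archimedean local field, $p\neq2$, uniformiser $\varpi$, valuation $\nu$; $E=F[\sqrt\epsilon]$ unramified quadratic ($\epsilon\in\mathcal{O}_F^\times$ non-square). $G=\mathbb{U}(1,1)(F)$ (hermitian form $\mathrm{w}=\begin{pmatrix}0&1\\1&0\end{pmatrix}$), $\mathcal{K}=G\cap M_2(\mathcal{O}_E)$ with filtration $\mathcal{K}_n=\begin{pmatrix}1+\mathfrak{p}_E^n&\mathfrak{p}_E^n\\ \mathfrak{p}_E^n&1+\mathfrak{p}_E^n\end{pmatrix}\cap G$ ($\mathcal{K}_s:=\mathcal{K}_{\lceil s\rceil}$) and Lie algebra filtration $\mathfrak{k}_r=\begin{pmatrix}\mathfrak{p}_E^{\lceil r\rceil}&\sqrt\epsilon\mathfrak{p}_F^{\lceil r\rceil}\\ \sqrt\epsilon\mathfrak{p}_F^{\lceil r\rceil}&\mathfrak{p}_E^{\lceil r\rceil}\end{pmatrix}\cap\mathfrak{k}$. $T(X)$ is the centralizer of $X$ in $\mathcal{K}$, namely $\left\{\begin{pmatrix}a&b\\ bu^{-1}v&a\end{pmatrix}: a,b\in\mathcal{O}_E,\ a\overline{a}+b\overline{b}u^{-1}v=1,\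 \overline{a}b\in\sqrt\epsilon\mathcal{O}_F\right\}$. *)

theory Defs
  imports Complex_Main
begin

text \<open>The valuation is an integer-valued function, only meaningful on nonzero elements;
  the convention nu 0 = +infinity is encoded by the predicate vge.\<close>

definition vge :: "('a::field \<Rightarrow> int) \<Rightarrow> 'a \<Rightarrow> int \<Rightarrow> bool" where
  "vge nu x n \<longleftrightarrow> x = 0 \<or> nu x \<ge> n"

definition discrete_valuation :: "('a::field \<Rightarrow> int) \<Rightarrow> bool" where
  "discrete_valuation nu \<longleftrightarrow>
     (\<forall>x y. x \<noteq> 0 \<longrightarrow> y \<noteq> 0 \<longrightarrow> nu (x * y) = nu x + nu y) \<and>
     (\<forall>x y. x \<noteq> 0 \<longrightarrow> y \<noteq> 0 \<longrightarrow> x + y \<noteq> 0 \<longrightarrow> nu (x + y) \<ge> min (nu x) (nu y)) \<and>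
     (\<exists>w. w \<noteq> 0 \<and> nu w = 1)"

definition val_cauchy :: "('a::field \<Rightarrow> int) \<Rightarrow> (nat \<Rightarrow> 'a) \<Rightarrow> bool" where
  "val_cauchy nu f \<longleftrightarrow> (\<forall>n. \<exists>N. \<forall>i\<ge>N. \<forall>j\<ge>N. vge nu (f i - f j) n)"

definition val_converges :: "('a::field \<Rightarrow> int) \<Rightarrow> (nat \<Rightarrow> 'a) \<Rightarrow> 'a \<Rightarrow> bool" where
  "val_converges nu f L \<longleftrightarrow> (\<forall>n. \<exists>N. \<forall>i\<ge>N. vge nu (f i - L) n)"

definition val_complete :: "('a::field \<Rightarrow> int) \<Rightarrow> bool" where
  "val_complete nu \<longleftrightarrow> (\<forall>f. val_cauchy nu f \<longrightarrow> (\<exists>L. val_converges nu f L))"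

definition finite_residue_field :: "('a::field \<Rightarrow> int) \<Rightarrow> bool" where
  "finite_residue_field nu \<longleftrightarrow>
     (\<exists>S. finite S \<and> S \<subseteq> {x. vge nu x 0} \<and>
          (\<forall>x. vge nu x 0 \<longrightarrow> (\<exists>s\<in>S. vge nu (x - s) 1)))"

definition nonarch_local_field :: "('a::field \<Rightarrow> int) \<Rightarrow> bool" where
  "nonarch_local_field nu \<longleftrightarrow>
     discrete_valuation nu \<and> val_complete nu \<and> finite_residue_field nu"

definition residue_char_not_2 :: "('a::field \<Rightarrow> int) \<Rightarrow> bool" where
  "residue_char_not_2 nu \<longleftrightarrow> (2::'a) \<noteq> 0 \<and> nu 2 = 0"

definition nonsquare_unit :: "('a::field \<Rightarrow> int) \<Rightarrow> 'a \<Rightarrow> bool" where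
  "nonsquare_unit nu e \<longleftrightarrow> e \<noteq> 0 \<and> nu e = 0 \<and> \<not> (\<exists>y. y * y = e)"

text \<open>The pair (a, b) represents a + b sqrt(eps).\<close>
type_synonym 'a ext = "'a \<times> 'a"

definition eadd :: "'a::field ext \<Rightarrow> 'a ext \<Rightarrow> 'a ext" where
  "eadd x y = (fst x + fst y, snd x + snd y)"
definition eneg :: "'a::field ext \<Rightarrow> 'a ext" where
  "eneg x = (- fst x, - snd x)"
definition emul :: "'a::field \<Rightarrow> 'a ext \<Rightarrow> 'a ext \<Rightarrow> 'a ext" where
  "emul e x y = (fst x * fst y + e * snd x * snd y, fst x * snd y + snd x * fst y)"
definition econj :: "'a::field ext \<Rightarrow> 'a ext" where
  "econj x = (fst x, - snd x)"
definition einv :: "'a::field \<Rightarrow> 'a ext \<Rightarrow> 'a ext" where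
  "einv e x = (let n = fst x * fst x - e * snd x * snd x in (fst x / n, - snd x / n))"

definition ezero :: "'a::field ext" where "ezero = (0, 0)"
definition eone :: "'a::field ext" where "eone = (1, 0)"

text \<open>O_E and p_E^n (E/F unramified, so p_E^n = varpi^n O_E = p_F^n + sqrt(eps) p_F^n).\<close>
definition OE :: "('a::field \<Rightarrow> int) \<Rightarrow> 'a ext set" where
  "OE nu = {x. vge nu (fst x) 0 \<and> vge nu (snd x) 0}"
definition pE :: "('a::field \<Rightarrow> int) \<Rightarrow> int \<Rightarrow> 'a ext set" where
  "pE nu n = {x. vge nu (fst x) n \<and> vge nu (snd x) n}"
definition sqeps_pF :: "('a::field \<Rightarrow> int) \<Rightarrow> int \<Rightarrow> 'a ext set" where
  "sqeps_pF nu n = {x. fst x = 0 \<and> vge nu (snd x) n}"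

datatype 'a m2 = M2 "'a ext" "'a ext" "'a ext" "'a ext"
  \<comment> \<open>M2 a b c d is the matrix ((a, b), (c, d))\<close>

fun m11 where "m11 (M2 a b c d) = a"
fun m12 where "m12 (M2 a b c d) = b"
fun m21 where "m21 (M2 a b c d) = c"
fun m22 where "m22 (M2 a b c d) = d"

fun madd :: "'a::field m2 \<Rightarrow> 'a m2 \<Rightarrow> 'a m2" where
  "madd (M2 a b c d) (M2 a' b' c' d') = M2 (eadd a a') (eadd b b') (eadd c c') (eadd d d')"
fun mneg :: "'a::field m2 \<Rightarrow> 'a m2" where
  "mneg (M2 a b c d) = M2 (eneg a) (eneg b) (eneg c) (eneg d)"
definition msub :: "'a::field m2 \<Rightarrow> 'a m2 \<Rightarrow> 'a m2" where
  "msub A B = madd A (mneg B)"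
fun mmul :: "'a::field \<Rightarrow> 'a m2 \<Rightarrow> 'a m2 \<Rightarrow> 'a m2" where
  "mmul e (M2 a b c d) (M2 a' b' c' d') =
     M2 (eadd (emul e a a') (emul e b c')) (eadd (emul e a b') (emul e b d'))
        (eadd (emul e c a') (emul e d c')) (eadd (emul e c b') (emul e d d'))"
fun mstar :: "'a::field m2 \<Rightarrow> 'a m2" where
  "mstar (M2 a b c d) = M2 (econj a) (econj c) (econj b) (econj d)"
fun mdet :: "'a::field \<Rightarrow> 'a m2 \<Rightarrow> 'a ext" where
  "mdet e (M2 a b c d) = eadd (emul e a d) (eneg (emul e b c))"
fun minv :: "'a::field \<Rightarrow> 'a m2 \<Rightarrow> 'a m2" where
  "minv e (M2 a b c d) =
     (let di = einv e (mdet e (M2 a b c d))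
      in M2 (emul e d di) (eneg (emul e b di)) (eneg (emul e c di)) (emul e a di))"

definition mzero :: "'a::field m2" where "mzero = M2 ezero ezero ezero ezero"
definition mw :: "'a::field m2" where "mw = M2 ezero eone eone ezero"

definition U11 :: "'a::field \<Rightarrow> 'a m2 set" where
  "U11 e = {g. mmul e (mmul e (mstar g) mw) g = mw}"

definition entries_in :: "'a ext set \<Rightarrow> 'a ext set \<Rightarrow> 'a m2 \<Rightarrow> bool" where
  "entries_in Dg Off g \<longleftrightarrow> m11 g \<in> Dg \<and> m22 g \<in> Dg \<and> m12 g \<in> Off \<and> m21 g \<in> Off"

definition Kgrp :: "('a::field \<Rightarrow> int) \<Rightarrow> 'a \<Rightarrow> 'a m2 set" where
  "Kgrp nu e = U11 e \<inter> {g. entries_in (OE nu) (OE nu) g}"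

definition Kfilt :: "('a::field \<Rightarrow> int) \<Rightarrow> 'a \<Rightarrow> int \<Rightarrow> 'a m2 set" where
  "Kfilt nu e n = U11 e \<inter>
     {g. eadd (m11 g) (eneg eone) \<in> pE nu n \<and> eadd (m22 g) (eneg eone) \<in> pE nu n \<and>
         m12 g \<in> pE nu n \<and> m21 g \<in> pE nu n}"

definition Ks :: "('a::field \<Rightarrow> int) \<Rightarrow> 'a \<Rightarrow> real \<Rightarrow> 'a m2 set" where
  "Ks nu e s = Kfilt nu e \<lceil>s\<rceil>"

definition lie_u11 :: "'a::field \<Rightarrow> 'a m2 set" where
  "lie_u11 e = {X. madd (mmul e (mstar X) mw) (mmul e mw X) = mzero}"

definition frak_k :: "('a::field \<Rightarrow> int) \<Rightarrow> 'a \<Rightarrow> 'a m2 set" where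
  "frak_k nu e = lie_u11 e \<inter> {X. entries_in (OE nu) (OE nu) X}"

definition frak_k_r :: "('a::field \<Rightarrow> int) \<Rightarrow> 'a \<Rightarrow> real \<Rightarrow> 'a m2 set" where
  "frak_k_r nu e r = frak_k nu e \<inter>
     {X. entries_in (pE nu \<lceil>r\<rceil>) (sqeps_pF nu \<lceil>r\<rceil>) X}"

definition centralizer_K :: "('a::field \<Rightarrow> int) \<Rightarrow> 'a \<Rightarrow> 'a m2 \<Rightarrow> 'a m2 set" where
  "centralizer_K nu e X = {k \<in> Kgrp nu e. mmul e k X = mmul e X k}"

definition Xuv :: "'a::field \<Rightarrow> 'a \<Rightarrow> 'a m2" where
  "Xuv u v = M2 (0, 0) (0, u) (0, v) (0, 0)"

end

theory Submission
  imports Defs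
begin


lemma dv_mult: "discrete_valuation nu \<Longrightarrow> x \<noteq> 0 \<Longrightarrow> y \<noteq> 0 \<Longrightarrow> nu (x*y) = nu x + nu y"
  unfolding discrete_valuation_def by blast
lemma dv_add: "discrete_valuation nu \<Longrightarrow> x \<noteq> 0 \<Longrightarrow> y \<noteq> 0 \<Longrightarrow> x + y \<noteq> 0 \<Longrightarrow> nu (x+y) \<ge> min (nu x) (nu y)"
  unfolding discrete_valuation_def by blast

lemma nu_1: assumes "discrete_valuation nu" shows "nu (1::'a::field) = 0"
  using dv_mult[OF assms, of 1 1] by simp

lemma nu_neg1: assumes "discrete_valuation nu" shows "nu (-1::'a::field) = 0"
  using dv_mult[OF assms, of "-1" "-1"] nu_1[OF assms] by simp

lemma nu_neg: assumes "discrete_valuation nu" "x \<noteq> 0" shows "nu (-x::'a::field) = nu x"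
  using dv_mult[OF assms(1), of "-1" x] nu_neg1[OF assms(1)] assms(2) by simp

lemma nu_inv: assumes "discrete_valuation nu" "x \<noteq> 0" shows "nu (inverse x::'a::field) = - nu x"
  using dv_mult[OF assms(1), of "inverse x" x] nu_1[OF assms(1)] assms(2) by simp

lemma vge_0[simp]: "vge nu 0 n" by (simp add: vge_def)

lemma vge_add: assumes "discrete_valuation nu" "vge nu x n" "vge nu y n" shows "vge nu (x+y) n"
  using assms dv_add[OF assms(1), of x y] unfolding vge_def
  by (cases "x = 0"; cases "y = 0"; cases "x+y = 0"; auto)

lemma vge_neg: assumes "discrete_valuation nu" "vge nu x n" shows "vge nu (-x) n"
  using assms nu_neg[OF assms(1), of x] unfolding vge_def by (cases "x = 0") auto

lemma vge_diff: assumes "discrete_valuation nu" "vge nu x n" "vge nu y n" shows "vge nu (x-y) n"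
  using vge_add[OF assms(1,2) vge_neg[OF assms(1,3)]] by simp

lemma vge_mult: assumes "discrete_valuation nu" "vge nu x m" "vge nu y n" shows "vge nu (x*y) (m+n)"
  using assms dv_mult[OF assms(1), of x y] unfolding vge_def by (cases "x = 0"; cases "y = 0") auto

lemma vge_mult0: assumes "discrete_valuation nu" "vge nu x 0" "vge nu y n" shows "vge nu (x*y) n"
  using vge_mult[OF assms] by simp

lemma vge_mult0': assumes "discrete_valuation nu" "vge nu x n" "vge nu y 0" shows "vge nu (x*y) n"
  using vge_mult[OF assms] by simp

lemma vge_mono: "vge nu x n \<Longrightarrow> m \<le> n \<Longrightarrow> vge nu x m"
  unfolding vge_def by auto

lemma vge_1: "discrete_valuation nu \<Longrightarrow> vge nu (1::'a::field) 0"
  using nu_1[of nu] unfolding vge_def by auto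

lemma vge_unit: "x \<noteq> 0 \<Longrightarrow> nu x = 0 \<Longrightarrow> vge nu x 0"
  unfolding vge_def by auto

lemma vge_inv_unit: assumes "discrete_valuation nu" "x \<noteq> 0" "nu x = 0" shows "vge nu (inverse x::'a::field) 0"
  using nu_inv[OF assms(1,2)] assms unfolding vge_def by auto

lemma unit_add: assumes "discrete_valuation nu" "x \<noteq> 0" "nu x = 0" "vge nu y 1"
  shows "x + y \<noteq> 0 \<and> nu (x+y) = (0::int)"
proof -
  have x0: "vge nu x 0" using assms by (simp add: vge_def)
  have s0: "vge nu (x+y) 0" using vge_add[OF assms(1) x0 vge_mono[OF assms(4)]] by simp
  have "\<not> vge nu (x+y) 1"
  proof
    assume "vge nu (x+y) 1"
    then have "vge nu ((x+y) - y) 1" using vge_diff[OF assms(1) _ assms(4)] by blast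
    then show False using assms by (simp add: vge_def)
  qed
  then show ?thesis using s0 by (auto simp: vge_def)
qed

lemma unit_cancel: assumes "discrete_valuation nu" "x \<noteq> 0" "nu x = 0" "vge nu (x*y) n"
  shows "vge nu (y::'a::field) n"
proof -
  have "y = inverse x * (x*y)" using assms(2) by simp
  moreover have "vge nu (inverse x * (x*y)) n" using vge_mult0[OF assms(1) vge_inv_unit[OF assms(1-3)] assms(4)] .
  ultimately show ?thesis by metis
qed

lemma not_vge1: "vge nu x 0 \<Longrightarrow> \<not> vge nu x 1 \<Longrightarrow> x \<noteq> 0 \<and> nu x = 0"
  unfolding vge_def by auto

lemma unit_mult: assumes "discrete_valuation nu" "x \<noteq> 0" "nu x = 0" "y \<noteq> 0" "nu y = 0"
  shows "x*y \<noteq> 0 \<and> nu (x*y) = (0::int)"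
  using dv_mult[OF assms(1,2,4)] assms by simp




definition mI :: "'a::field m2" where "mI = M2 eone ezero ezero eone"

lemmas edefs = eadd_def eneg_def emul_def econj_def ezero_def eone_def

lemma mmul_assoc: "mmul e (mmul e A B) C = mmul e A (mmul e B C)"
  by (cases A; cases B; cases C) (simp add: edefs algebra_simps)

lemma mstar_mmul: "mstar (mmul e A B) = mmul e (mstar B) (mstar A)"
  by (cases A; cases B) (simp add: edefs algebra_simps)

lemma mstar_mw[simp]: "mstar mw = mw" by (simp add: mw_def edefs)
lemma mstar_mI[simp]: "mstar mI = mI" by (simp add: mI_def edefs)
lemma mstar_mstar[simp]: "mstar (mstar A) = A" by (cases A) (simp add: edefs)
lemma mmul_mI_left[simp]: "mmul e mI A = A" by (cases A) (simp add: mI_def edefs)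
lemma mmul_mI_right[simp]: "mmul e A mI = A" by (cases A) (simp add: mI_def edefs)
lemma mw_mw: "mmul e mw mw = mI" by (simp add: mI_def mw_def edefs)

lemma mmul_msub_right: "mmul e A (msub B C) = msub (mmul e A B) (mmul e A C)"
  by (cases A; cases B; cases C) (simp add: msub_def edefs algebra_simps)
lemma mmul_msub_left: "mmul e (msub B C) A = msub (mmul e B A) (mmul e C A)"
  by (cases A; cases B; cases C) (simp add: msub_def edefs algebra_simps)
lemma mmul_madd_right: "mmul e A (madd B C) = madd (mmul e A B) (mmul e A C)"
  by (cases A; cases B; cases C) (simp add: edefs algebra_simps)
lemma mmul_madd_left: "mmul e (madd B C) A = madd (mmul e B A) (mmul e C A)"
  by (cases A; cases B; cases C) (simp add: edefs algebra_simps)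
lemma mstar_msub: "mstar (msub A B) = msub (mstar A) (mstar B)"
  by (cases A; cases B) (simp add: msub_def edefs)
lemma mstar_madd: "mstar (madd A B) = madd (mstar A) (mstar B)"
  by (cases A; cases B) (simp add: edefs)
lemma mmul_mzero_left[simp]: "mmul e mzero A = mzero"
  by (cases A) (simp add: mzero_def edefs)
lemma mmul_mzero_right[simp]: "mmul e A mzero = mzero"
  by (cases A) (simp add: mzero_def edefs)
lemma msub_self[simp]: "msub A A = mzero"
  by (cases A) (simp add: msub_def mzero_def edefs)
lemma msub_mzero[simp]: "msub mzero mzero = mzero"
  by (simp add: msub_def mzero_def edefs)
lemma madd_msub_cancel: "madd (msub A B) B = A"
  by (cases A; cases B) (simp add: msub_def edefs)
lemma msub_eq_mzero: "msub A B = mzero \<Longrightarrow> A = B"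
  by (cases A; cases B) (simp add: msub_def mzero_def edefs prod_eq_iff)

definition enorm :: "'a::field \<Rightarrow> 'a ext \<Rightarrow> 'a" where
  "enorm e x = fst x * fst x - e * snd x * snd x"

lemma einv_mul: assumes "enorm e d \<noteq> 0" shows "emul e (einv e d) d = eone"
proof -
  obtain x y where d: "d = (x,y)" by fastforce
  have n: "x*x - e*y*y \<noteq> 0" using assms d by (simp add: enorm_def)
  have "x / (x*x - e*y*y) * x + e * (- y / (x*x - e*y*y)) * y = (x*x - e*y*y) / (x*x - e*y*y)"
    by (simp add: field_simps)
  also have "... = 1" using n by simp
  finally have 1: "x / (x*x - e*y*y) * x + e * (- y / (x*x - e*y*y)) * y = 1" .
  have 2: "x / (x*x - e*y*y) * y + (- y / (x*x - e*y*y)) * x = 0"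
    by (simp add: field_simps)
  show ?thesis using 1 2 by (simp add: d einv_def Let_def edefs)
qed

lemma adj_mul: "mmul e (M2 (emul e D di) (eneg (emul e B di)) (eneg (emul e C di)) (emul e A di)) (M2 A B C D)
   = M2 (emul e di (mdet e (M2 A B C D))) ezero ezero (emul e di (mdet e (M2 A B C D)))"
  by (simp add: edefs prod_eq_iff algebra_simps)

lemma mul_adj: "mmul e (M2 A B C D) (M2 (emul e D di) (eneg (emul e B di)) (eneg (emul e C di)) (emul e A di))
   = M2 (emul e di (mdet e (M2 A B C D))) ezero ezero (emul e di (mdet e (M2 A B C D)))"
  by (simp add: edefs prod_eq_iff algebra_simps)

lemma minv_left: assumes "enorm e (mdet e g) \<noteq> 0" shows "mmul e (minv e g) g = mI"
proof (cases g)
  case (M2 A B C D)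
  have di: "emul e (einv e (mdet e g)) (mdet e g) = eone" using einv_mul[OF assms] by simp
  show ?thesis using adj_mul[of e D "einv e (mdet e g)" B C A] di unfolding M2 
    by (simp only: minv.simps Let_def mI_def)
qed

lemma minv_right: assumes "enorm e (mdet e g) \<noteq> 0" shows "mmul e g (minv e g) = mI"
proof (cases g)
  case (M2 A B C D)
  have di: "emul e (einv e (mdet e g)) (mdet e g) = eone" using einv_mul[OF assms] by simp
  show ?thesis using mul_adj[of e A B C D "einv e (mdet e g)"] di unfolding M2 
    by (simp only: minv.simps Let_def mI_def)
qed




lemma mdet_mmul: "mdet e (mmul e A B) = emul e (mdet e A) (mdet e B)"
  by (cases A; cases B) (simp add: edefs prod_eq_iff algebra_simps)

lemma mdet_mstar: "mdet e (mstar A) = econj (mdet e A)"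
  by (cases A) (simp add: edefs prod_eq_iff algebra_simps)

lemma U11_norm: assumes "g \<in> U11 e" shows "enorm e (mdet e g) = 1"
proof -
  have "mdet e (mmul e (mmul e (mstar g) mw) g) = mdet e mw" using assms by (simp add: U11_def)
  then have "emul e (emul e (econj (mdet e g)) (mdet e mw)) (mdet e g) = mdet e mw"
    by (simp add: mdet_mmul mdet_mstar)
  then show ?thesis by (simp add: mw_def edefs enorm_def prod_eq_iff algebra_simps)
qed

lemma U11_norm_ne: "g \<in> U11 e \<Longrightarrow> enorm e (mdet e g) \<noteq> 0"
  using U11_norm by fastforce

lemma U11_mmul: assumes "g \<in> U11 e" "h \<in> U11 e" shows "mmul e g h \<in> U11 e"
proof -
  have "mmul e (mmul e (mstar (mmul e g h)) mw) (mmul e g h)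
     = mmul e (mstar h) (mmul e (mmul e (mmul e (mstar g) mw) g) h)"
    by (simp add: mstar_mmul mmul_assoc)
  also have "... = mw" using assms by (simp add: U11_def mmul_assoc[symmetric])
  finally show ?thesis by (simp add: U11_def)
qed

lemma U11_minv: assumes "g \<in> U11 e" shows "minv e g \<in> U11 e"
proof -
  let ?h = "minv e g"
  have r: "mmul e g ?h = mI" using minv_right[OF U11_norm_ne[OF assms]] .
  have "mmul e (mmul e (mstar ?h) mw) ?h
      = mmul e (mmul e (mstar ?h) (mmul e (mmul e (mstar g) mw) g)) ?h"
    using assms by (simp add: U11_def)
  also have "... = mmul e (mmul e (mstar (mmul e g ?h)) mw) (mmul e g ?h)"
    by (simp add: mstar_mmul mmul_assoc)
  also have "... = mw" using r by simp
  finally show ?thesis by (simp add: U11_def)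
qed

lemma U11_rel: fixes A B C D :: "'a::field ext" assumes "M2 A B C D \<in> U11 e" and "(2::'a) \<noteq> 0"
  shows "fst (emul e (econj A) C) = 0" "fst (emul e (econj B) D) = 0"
    "eadd (emul e (econj A) D) (emul e (econj C) B) = eone"
proof -
  have h: "mmul e (mmul e (mstar (M2 A B C D)) mw) (M2 A B C D) = mw" using assms by (simp add: U11_def)
  then have "2 * fst (emul e (econj A) C) = 0" by (simp add: mw_def edefs prod_eq_iff algebra_simps)
  then show "fst (emul e (econj A) C) = 0" using assms(2) by simp
  have "2 * fst (emul e (econj B) D) = 0" using h by (simp add: mw_def edefs prod_eq_iff algebra_simps)
  then show "fst (emul e (econj B) D) = 0" using assms(2) by simp
  have "m12 (mmul e (mmul e (mstar (M2 A B C D)) mw) (M2 A B C D)) = m12 mw" using h by simp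
  then show "eadd (emul e (econj A) D) (emul e (econj C) B) = eone"
    by (simp add: mw_def edefs prod_eq_iff add.commute)
qed

lemma lie_conj: assumes "g \<in> U11 e" "Y \<in> lie_u11 e"
  shows "mmul e (mmul e (minv e g) Y) g \<in> lie_u11 e"
proof -
  let ?h = "minv e g"
  have r: "mmul e g ?h = mI" using minv_right[OF U11_norm_ne[OF assms(1)]] .
  have gw: "mmul e (mmul e (mstar g) mw) g = mw" using assms by (simp add: U11_def)
  have wh: "mmul e mw ?h = mmul e (mstar g) mw"
  proof -
    have "mmul e mw ?h = mmul e (mmul e (mmul e (mstar g) mw) g) ?h" using gw by simp
    also have "... = mmul e (mstar g) mw" using r by (simp add: mmul_assoc)
    finally show ?thesis .
  qed
  have hw: "mmul e (mstar ?h) mw = mmul e mw g"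
  proof -
    have "mstar (mmul e mw ?h) = mstar (mmul e (mstar g) mw)" using wh by simp
    then show ?thesis by (simp add: mstar_mmul)
  qed
  have Y: "madd (mmul e (mstar Y) mw) (mmul e mw Y) = mzero" using assms by (simp add: lie_u11_def)
  have "madd (mmul e (mstar (mmul e (mmul e ?h Y) g)) mw) (mmul e mw (mmul e (mmul e ?h Y) g))
     = madd (mmul e (mstar g) (mmul e (mstar Y) (mmul e (mstar ?h) mw))) (mmul e (mmul e mw ?h) (mmul e Y g))"
    by (simp add: mstar_mmul mmul_assoc)
  also have "... = mmul e (mstar g) (mmul e (madd (mmul e (mstar Y) mw) (mmul e mw Y)) g)"
    unfolding hw wh by (simp add: mmul_assoc mmul_madd_left mmul_madd_right)
  also have "... = mzero" using Y by simp
  finally show ?thesis by (simp add: lie_u11_def)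
qed

lemma lie_msub: assumes "A \<in> lie_u11 e" "B \<in> lie_u11 e" shows "msub A B \<in> lie_u11 e"
proof -
  have "madd (mmul e (mstar (msub A B)) mw) (mmul e mw (msub A B))
     = msub (madd (mmul e (mstar A) mw) (mmul e mw A)) (madd (mmul e (mstar B) mw) (mmul e mw B))"
    by (cases A; cases B) (simp add: mw_def msub_def edefs algebra_simps)
  then show ?thesis using assms by (simp add: lie_u11_def)
qed

lemma Xuv_lie: "Xuv u v \<in> lie_u11 e"
  by (simp add: Xuv_def lie_u11_def mw_def mzero_def edefs)

lemma lie_off: fixes a b c d :: "'a::field ext" assumes "M2 a b c d \<in> lie_u11 e" "(2::'a) \<noteq> 0"
  shows "fst b = 0" "fst c = 0"
proof -
  have h: "madd (mmul e (mstar (M2 a b c d)) mw) (mmul e mw (M2 a b c d)) = mzero"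
    using assms by (simp add: lie_u11_def)
  have "2 * fst b = 0" using h by (simp add: mw_def mzero_def edefs prod_eq_iff)
  then show "fst b = 0" using assms by simp
  have "2 * fst c = 0" using h by (simp add: mw_def mzero_def edefs prod_eq_iff)
  then show "fst c = 0" using assms by simp
qed




definition scal :: "'a::field \<Rightarrow> 'a ext \<Rightarrow> 'a ext" where
  "scal c x = (c * fst x, c * snd x)"

definition mat_in :: "('a::field \<Rightarrow> int) \<Rightarrow> int \<Rightarrow> 'a m2 \<Rightarrow> bool" where
  "mat_in nu n M \<longleftrightarrow> entries_in (pE nu n) (pE nu n) M"

locale vctx =
  fixes nu :: "'a::field \<Rightarrow> int" and e :: 'a
  assumes dv: "discrete_valuation nu" and e_ne: "e \<noteq> 0" and e_nu: "nu e = 0"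
    and two_ne: "(2::'a) \<noteq> 0" and two_nu: "nu 2 = 0"
begin

lemma e0: "vge nu e 0" using e_ne e_nu by (simp add: vge_def)

lemma pE_iff: "x \<in> pE nu n \<longleftrightarrow> vge nu (fst x) n \<and> vge nu (snd x) n" by (simp add: pE_def)

lemma pE_add: "x \<in> pE nu n \<Longrightarrow> y \<in> pE nu n \<Longrightarrow> eadd x y \<in> pE nu n"
  by (simp add: pE_iff eadd_def vge_add[OF dv])
lemma pE_neg: "x \<in> pE nu n \<Longrightarrow> eneg x \<in> pE nu n"
  by (simp add: pE_iff eneg_def vge_neg[OF dv])
lemma pE_sub: "x \<in> pE nu n \<Longrightarrow> y \<in> pE nu n \<Longrightarrow> eadd x (eneg y) \<in> pE nu n"
  by (simp add: pE_add pE_neg)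
lemma pE_conj: "x \<in> pE nu n \<Longrightarrow> econj x \<in> pE nu n"
  by (simp add: pE_iff econj_def vge_neg[OF dv])
lemma pE_mono: "x \<in> pE nu n \<Longrightarrow> m \<le> n \<Longrightarrow> x \<in> pE nu m"
  by (auto simp add: pE_iff intro: vge_mono)
lemma pE_zero[simp]: "ezero \<in> pE nu n" by (simp add: pE_iff ezero_def)
lemma pE_one: "eone \<in> pE nu 0" by (simp add: pE_iff eone_def vge_1[OF dv])
lemma pE_mul: assumes "x \<in> pE nu m" "y \<in> pE nu n" shows "emul e x y \<in> pE nu (m+n)"
proof -
  have a: "vge nu (fst x * fst y) (m+n)" "vge nu (snd x * snd y) (m+n)"
     "vge nu (fst x * snd y) (m+n)" "vge nu (snd x * fst y) (m+n)"
    using assms by (auto simp: pE_iff intro!: vge_mult[OF dv])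
  have "vge nu (e * (snd x * snd y)) (m+n)" using vge_mult0[OF dv e0 a(2)] .
  then show ?thesis using a by (simp add: pE_iff emul_def vge_add[OF dv] mult.assoc)
qed
lemma pE_mul0: "x \<in> pE nu 0 \<Longrightarrow> y \<in> pE nu n \<Longrightarrow> emul e x y \<in> pE nu n"
  using pE_mul[of x 0 y n] by simp
lemma pE_mul0': "x \<in> pE nu n \<Longrightarrow> y \<in> pE nu 0 \<Longrightarrow> emul e x y \<in> pE nu n"
  using pE_mul[of x n y 0] by simp
lemma pE_scal: "vge nu c m \<Longrightarrow> x \<in> pE nu n \<Longrightarrow> scal c x \<in> pE nu (m+n)"
  by (simp add: pE_iff scal_def vge_mult[OF dv])
lemma pE_scal0: "vge nu c 0 \<Longrightarrow> x \<in> pE nu n \<Longrightarrow> scal c x \<in> pE nu n"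
  using pE_scal[of c 0 x n] by simp
lemma pE_real: "vge nu c n \<Longrightarrow> (c, 0) \<in> pE nu n" by (simp add: pE_iff)

lemma OE_pE: "OE nu = pE nu 0" by (simp add: OE_def pE_def)

lemma mat_mmul: "mat_in nu m A \<Longrightarrow> mat_in nu n B \<Longrightarrow> mat_in nu (m+n) (mmul e A B)"
  by (cases A; cases B) (simp add: mat_in_def entries_in_def pE_add pE_mul)
lemma mat_mmul0: "mat_in nu 0 A \<Longrightarrow> mat_in nu n B \<Longrightarrow> mat_in nu n (mmul e A B)"
  using mat_mmul[of 0 A n B] by simp
lemma mat_msub: "mat_in nu n A \<Longrightarrow> mat_in nu n B \<Longrightarrow> mat_in nu n (msub A B)"
  by (cases A; cases B) (simp add: mat_in_def entries_in_def msub_def pE_add pE_neg)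
lemma mat_mono: "mat_in nu n A \<Longrightarrow> m \<le> n \<Longrightarrow> mat_in nu m A"
  by (cases A) (auto simp add: mat_in_def entries_in_def intro: pE_mono)

lemma Kgrp_mat: "k \<in> Kgrp nu e \<Longrightarrow> mat_in nu 0 k"
  by (simp add: Kgrp_def mat_in_def OE_pE)

lemma einv_norm1: "enorm e d = 1 \<Longrightarrow> einv e d = econj d"
  by (simp add: einv_def enorm_def econj_def Let_def)

lemma minv_mat: assumes "k \<in> U11 e" "mat_in nu 0 k" shows "mat_in nu 0 (minv e k)"
proof (cases k)
  case (M2 A B C D)
  have n: "einv e (mdet e k) = econj (mdet e k)" using einv_norm1 U11_norm[OF assms(1)] by simp
  have ent: "A \<in> pE nu 0" "B \<in> pE nu 0" "C \<in> pE nu 0" "D \<in> pE nu 0"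
    using assms(2) M2 by (auto simp: mat_in_def entries_in_def)
  have d: "mdet e k \<in> pE nu 0" using ent M2 by (simp add: pE_sub pE_mul0)
  have di: "einv e (mdet e k) \<in> pE nu 0" using n pE_conj[OF d] by simp
  define di where "di = einv e (mdet e k)"
  have "minv e k = M2 (emul e D di) (eneg (emul e B di)) (eneg (emul e C di)) (emul e A di)"
    unfolding di_def M2 by (simp add: Let_def)
  then show ?thesis using ent di unfolding di_def[symmetric]
    by (simp add: mat_in_def entries_in_def pE_neg pE_mul0)
qed

lemma minv_Kgrp: "k \<in> Kgrp nu e \<Longrightarrow> minv e k \<in> Kgrp nu e"
  using minv_mat[of k] U11_minv[of k e] Kgrp_mat[of k]
  by (simp add: Kgrp_def mat_in_def OE_pE)

end



definition sq :: "'a::field \<Rightarrow> 'a ext \<Rightarrow> 'a ext" where "sq e x = (e * snd x, fst x)"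

context vctx begin

lemma sq_iff: "sq e x \<in> pE nu n \<longleftrightarrow> x \<in> pE nu n"
proof
  assume "sq e x \<in> pE nu n"
  then have "vge nu (e * snd x) n" "vge nu (fst x) n" by (auto simp: sq_def pE_iff)
  then show "x \<in> pE nu n" using unit_cancel[OF dv e_ne e_nu] by (simp add: pE_iff)
next
  assume "x \<in> pE nu n" then show "sq e x \<in> pE nu n"
    by (simp add: sq_def pE_iff vge_mult0[OF dv e0])
qed

lemma scal_unit_iff: assumes "u \<noteq> 0" "nu u = 0" shows "scal u x \<in> pE nu n \<longleftrightarrow> x \<in> pE nu n"
proof
  assume "scal u x \<in> pE nu n"
  then show "x \<in> pE nu n" using unit_cancel[OF dv assms] by (simp add: pE_iff scal_def)
next
  assume "x \<in> pE nu n" then show "scal u x \<in> pE nu n"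
    using pE_scal0[of u x n] assms by (simp add: vge_def)
qed

lemma eneg_iff: "eneg x \<in> pE nu n \<longleftrightarrow> x \<in> pE nu n"
  using pE_neg[of x n] pE_neg[of "eneg x" n] unfolding eneg_def by auto

lemma Mc_form: "msub (mmul e (Xuv u v) (M2 A B C D)) (mmul e (M2 A B C D) (Xuv u v))
  = M2 (sq e (eadd (scal u C) (eneg (scal v B)))) (scal u (sq e (eadd D (eneg A))))
       (eneg (scal v (sq e (eadd D (eneg A))))) (eneg (sq e (eadd (scal u C) (eneg (scal v B)))))"
  by (simp add: Xuv_def msub_def edefs sq_def scal_def algebra_simps)

lemma Mc_iff: assumes "u \<noteq> 0" "nu u = 0" "vge nu v 0"
  shows "mat_in nu n (msub (mmul e (Xuv u v) (M2 A B C D)) (mmul e (M2 A B C D) (Xuv u v)))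
    \<longleftrightarrow> eadd (scal u C) (eneg (scal v B)) \<in> pE nu n \<and> eadd D (eneg A) \<in> pE nu n"
proof -
  have h: "\<And>x. x \<in> pE nu n \<Longrightarrow> scal v x \<in> pE nu n" using pE_scal0[OF assms(3)] .
  show ?thesis unfolding Mc_form mat_in_def entries_in_def m11.simps m12.simps m21.simps m22.simps
    eneg_iff sq_iff scal_unit_iff[OF assms(1,2)] using h sq_iff by blast
qed

end



context vctx begin

lemma char: assumes k: "k \<in> Kgrp nu e" and u: "u \<noteq> 0" "nu u = 0" and v: "vge nu v 0"
  and s: "s > 0"
  shows "msub (mmul e (mmul e (minv e k) (Xuv u v)) k) (Xuv u v) \<in> frak_k_r nu e s
    \<longleftrightarrow> mat_in nu \<lceil>s\<rceil> (msub (mmul e (Xuv u v) k) (mmul e k (Xuv u v)))"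
proof -
  let ?X = "Xuv u v" and ?h = "minv e k"
  define Z where "Z = msub (mmul e (mmul e ?h ?X) k) ?X"
  define Mc where "Mc = msub (mmul e ?X k) (mmul e k ?X)"
  have kU: "k \<in> U11 e" using k by (simp add: Kgrp_def)
  have r: "mmul e k ?h = mI" using minv_right[OF U11_norm_ne[OF kU]] .
  have l: "mmul e ?h k = mI" using minv_left[OF U11_norm_ne[OF kU]] .
  have kZ: "mmul e k Z = Mc"
  proof -
    have "mmul e k Z = msub (mmul e (mmul e (mmul e k ?h) ?X) k) (mmul e k ?X)"
      unfolding Z_def mmul_msub_right by (simp add: mmul_assoc)
    then show ?thesis using r by (simp add: Mc_def)
  qed
  have Zh: "Z = mmul e ?h Mc"
  proof -
    have "mmul e ?h Mc = msub (mmul e (mmul e ?h ?X) k) (mmul e (mmul e ?h k) ?X)"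
      unfolding Mc_def mmul_msub_right by (simp add: mmul_assoc)
    then show ?thesis using l by (simp add: Z_def)
  qed
  have n: "\<lceil>s\<rceil> \<ge> 1" using s by simp
  show ?thesis unfolding Z_def[symmetric] Mc_def[symmetric]
  proof
    assume "Z \<in> frak_k_r nu e s"
    then have "entries_in (pE nu \<lceil>s\<rceil>) (sqeps_pF nu \<lceil>s\<rceil>) Z" by (simp add: frak_k_r_def)
    then have "mat_in nu \<lceil>s\<rceil> Z"
      by (auto simp: entries_in_def mat_in_def sqeps_pF_def pE_def)
    then show "mat_in nu \<lceil>s\<rceil> Mc" using mat_mmul0[OF Kgrp_mat[OF k]] kZ by metis
  next
    assume M: "mat_in nu \<lceil>s\<rceil> Mc"
    have Zm: "mat_in nu \<lceil>s\<rceil> Z" using mat_mmul0[OF Kgrp_mat[OF minv_Kgrp[OF k]] M] Zh by simp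
    have Zl: "Z \<in> lie_u11 e" unfolding Z_def using lie_msub[OF lie_conj[OF kU Xuv_lie] Xuv_lie] .
    obtain a b c d where Z: "Z = M2 a b c d" by (cases Z)
    have fb: "fst b = 0" "fst c = 0" using lie_off[OF _ two_ne] Zl Z by auto
    have Z0: "mat_in nu 0 Z" using mat_mono[OF Zm] n by simp
    show "Z \<in> frak_k_r nu e s" using Zm Z0 Zl fb unfolding frak_k_r_def frak_k_def Z
      by (simp add: OE_pE mat_in_def entries_in_def sqeps_pF_def pE_iff)
  qed
qed

end



context vctx begin

lemma Kfilt_mat: "g \<in> Kfilt nu e n \<Longrightarrow> mat_in nu n (msub g mI)"
  by (cases g) (simp add: Kfilt_def mat_in_def entries_in_def msub_def mI_def eneg_def ezero_def eadd_def pE_iff)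

lemma backward: assumes c: "c \<in> centralizer_K nu e (Xuv u v)" and g: "g \<in> Kfilt nu e n"
  and u: "u \<noteq> 0" "nu u = 0" and v: "vge nu v 0"
  shows "mat_in nu n (msub (mmul e (Xuv u v) (mmul e c g)) (mmul e (mmul e c g) (Xuv u v)))"
proof -
  obtain A B C D where k: "mmul e c g = M2 A B C D" by (cases "mmul e c g")
  obtain a b c' d where cc: "c = M2 a b c' d" by (cases c)
  have "msub (mmul e (Xuv u v) c) (mmul e c (Xuv u v)) = mzero"
    using c by (simp add: centralizer_K_def)
  then have "mat_in nu n (msub (mmul e (Xuv u v) c) (mmul e c (Xuv u v)))"
    by (simp add: mat_in_def entries_in_def mzero_def)
  then have pc: "eadd (scal u c') (eneg (scal v b)) \<in> pE nu n" "eadd d (eneg a) \<in> pE nu n"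
    using Mc_iff[OF u v] cc by auto
  have cm: "mat_in nu 0 c" using c Kgrp_mat by (simp add: centralizer_K_def)
  have "mat_in nu n (mmul e c (msub g mI))" using mat_mmul0[OF cm Kfilt_mat[OF g]] .
  then have "mat_in nu n (msub (mmul e c g) c)" by (simp add: mmul_msub_right)
  then have "mat_in nu n (msub (M2 A B C D) (M2 a b c' d))" using k cc by simp
  then have dd: "eadd A (eneg a) \<in> pE nu n" "eadd B (eneg b) \<in> pE nu n"
     "eadd C (eneg c') \<in> pE nu n" "eadd D (eneg d) \<in> pE nu n"
    by (auto simp: mat_in_def entries_in_def msub_def)
  have vv: "\<And>x. x \<in> pE nu n \<Longrightarrow> scal v x \<in> pE nu n" using pE_scal0[OF v] .
  have uu: "\<And>x. x \<in> pE nu n \<Longrightarrow> scal u x \<in> pE nu n" using pE_scal0[of u] u by (simp add: vge_def)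
  have P: "eadd (scal u C) (eneg (scal v B)) = eadd (eadd (scal u c') (eneg (scal v b)))
      (eadd (scal u (eadd C (eneg c'))) (eneg (scal v (eadd B (eneg b)))))"
    by (simp add: edefs scal_def prod_eq_iff algebra_simps)
  have R: "eadd D (eneg A) = eadd (eadd d (eneg a)) (eadd (eadd D (eneg d)) (eneg (eadd A (eneg a))))"
    by (simp add: edefs prod_eq_iff algebra_simps)
  have "eadd (scal u C) (eneg (scal v B)) \<in> pE nu n" unfolding P
    using pc dd uu vv by (simp add: pE_add pE_neg)
  moreover have "eadd D (eneg A) \<in> pE nu n" unfolding R
    using pc dd by (simp add: pE_add pE_neg)
  ultimately show ?thesis unfolding k using Mc_iff[OF u v] by simp
qed

end



definition pp where "pp e l A = eadd l (emul e A (econj l))"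
definition qq where "qq e l B = emul e B (econj l)"
definition Dn where "Dn e w p q = eadd (emul e (econj p) (econj p)) (eneg (scal w (emul e (econj q) (econj q))))"
definition ra where "ra e w p q = eadd (emul e p (econj p)) (eneg (scal w (emul e q (econj q))))"
definition rb where "rb e p q = eadd (emul e q (econj p)) (eneg (emul e p (econj q)))"

lemma id_a: "eadd (ra e w (pp e l A) (qq e l B)) (eneg (emul e A (Dn e w (pp e l A) (qq e l B))))
  = emul e l (eadd (scal (1 - enorm e A - w * enorm e B) (econj (pp e l A)))
      (eneg (scal (w * (- 2 * fst (emul e (econj A) B))) (econj (qq e l B)))))"
  by (simp add: pp_def qq_def Dn_def ra_def edefs enorm_def scal_def prod_eq_iff algebra_simps)

lemma id_b: "eadd (rb e (pp e l A) (qq e l B)) (eneg (emul e B (Dn e w (pp e l A) (qq e l B))))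
  = emul e l (eadd (scal (- 2 * fst (emul e (econj A) B)) (econj (pp e l A)))
      (eneg (scal (1 - enorm e A - w * enorm e B) (econj (qq e l B)))))"
  by (simp add: pp_def qq_def Dn_def rb_def edefs enorm_def scal_def prod_eq_iff algebra_simps)

lemma id_N: "enorm e (Dn e w p q) = enorm e p * enorm e p
   + w * (- 2 * (fst (emul e (econj p) q) * fst (emul e (econj p) q) + e * snd (emul e (econj p) q) * snd (emul e (econj p) q))
          + w * (enorm e q * enorm e q))"
  by (simp add: Dn_def edefs enorm_def scal_def algebra_simps)

lemma id_ra: "snd (ra e w p q) = 0" by (simp add: ra_def edefs scal_def algebra_simps)
lemma id_rb: "fst (rb e p q) = 0" by (simp add: rb_def edefs scal_def algebra_simps)
lemma id_U: "fst (ra e w p q) * fst (ra e w p q) - w * e * snd (rb e p q) * snd (rb e p q) = enorm e (Dn e w p q)"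
  by (simp add: Dn_def ra_def rb_def edefs enorm_def scal_def algebra_simps)




lemma emul_di: "emul e d di = eone \<Longrightarrow> eadd (emul e x di) (eneg A) = emul e (eadd x (eneg (emul e A d))) di"
proof -
  assume h: "emul e d di = eone"
  have "emul e (eadd x (eneg (emul e A d))) di = eadd (emul e x di) (eneg (emul e A (emul e d di)))"
    by (simp add: edefs prod_eq_iff algebra_simps)
  then show ?thesis using h by (simp add: edefs)
qed

lemma U11_of: fixes a b :: "'a::field ext"
  assumes "fst (emul e (econj a) b) = 0" "enorm e a + w * enorm e b = 1"
  shows "M2 a b (scal w b) a \<in> U11 e"
proof -
  have h1: "fst a * fst b - e * snd a * snd b = 0" "fst a * fst a - e * snd a * snd a + w * (fst b * fst b - e * snd b * snd b) = 1"
    using assms by (simp_all add: edefs enorm_def algebra_simps)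
  have "mmul e (mmul e (mstar (M2 a b (scal w b) a)) mw) (M2 a b (scal w b) a) =
    M2 (scal (2*w*(fst a * fst b - e * snd a * snd b)) eone)
       (fst a * fst a - e * snd a * snd a + w * (fst b * fst b - e * snd b * snd b), 0)
       (fst a * fst a - e * snd a * snd a + w * (fst b * fst b - e * snd b * snd b), 0)
       (scal (2*(fst a * fst b - e * snd a * snd b)) eone)"
    by (simp add: mw_def edefs scal_def prod_eq_iff algebra_simps)
  also have "... = mw" unfolding h1 by (simp add: mw_def scal_def edefs)
  finally show ?thesis by (simp add: U11_def)
qed

lemma enorm_mul: "enorm e (emul e x y) = enorm e x * enorm e y"
  by (simp add: enorm_def edefs algebra_simps)

lemma re_ab: "snd r = 0 \<Longrightarrow> fst t = 0 \<Longrightarrow> fst (emul e (econj (emul e r di)) (emul e t di)) = 0"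
  by (simp add: edefs algebra_simps)

lemma emul_comm: "emul e x y = emul e y x" by (simp add: emul_def algebra_simps)

context vctx begin

lemma einv_pE: assumes "d \<in> pE nu 0" "enorm e d \<noteq> 0" "nu (enorm e d) = 0"
  shows "einv e d \<in> pE nu 0"
proof -
  have "einv e d = scal (inverse (enorm e d)) (econj d)"
    by (simp add: einv_def scal_def enorm_def econj_def Let_def divide_inverse algebra_simps)
  then show ?thesis using pE_scal0[OF vge_inv_unit[OF dv assms(2,3)] pE_conj[OF assms(1)]] by simp
qed

lemma fst_pE: "x \<in> pE nu n \<Longrightarrow> vge nu (fst x) n" by (simp add: pE_iff)

lemma enorm_vge: "x \<in> pE nu 0 \<Longrightarrow> vge nu (enorm e x) 0"
  using fst_pE[OF pE_mul0[of "econj x" x 0]] pE_conj[of x 0]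
  by (simp add: enorm_def edefs algebra_simps)

lemma nu_2: "vge nu (2::'a) 0" using two_ne two_nu by (simp add: vge_def)

end



context vctx begin

lemma choose_l: assumes A: "A \<in> pE nu 0" and t: "vge nu (enorm e A - 1) 1"
  shows "\<exists>l \<in> pE nu 0. enorm e (pp e l A) \<noteq> 0 \<and> nu (enorm e (pp e l A)) = 0"
proof -
  let ?t = "enorm e A - 1"
  have fA: "vge nu (fst A) 0" using A by (simp add: pE_iff)
  have one: "vge nu (1::'a) 0" using vge_1[OF dv] .
  show ?thesis
  proof (cases "vge nu (1 + fst A) 1")
    case False
    have u1: "1 + fst A \<noteq> 0 \<and> nu (1 + fst A) = 0"
      using not_vge1[OF vge_add[OF dv one fA] False] .
    have u2: "2 * (1 + fst A) \<noteq> 0 \<and> nu (2 * (1 + fst A)) = 0"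
      using unit_mult[OF dv two_ne two_nu] u1 by blast
    have eq: "enorm e (pp e eone A) = 2 * (1 + fst A) + ?t"
      by (simp add: pp_def enorm_def edefs algebra_simps)
    have l: "eone \<in> pE nu 0" using pE_one .
    have "2 * (1 + fst A) + ?t \<noteq> 0 \<and> nu (2 * (1 + fst A) + ?t) = 0"
      using unit_add[OF dv _ _ t] u2 by blast
    then show ?thesis using eq l by metis
  next
    case True
    have "\<not> vge nu (1 - fst A) 1"
    proof
      assume "vge nu (1 - fst A) 1"
      then have "vge nu ((1 + fst A) + (1 - fst A)) 1" using vge_add[OF dv True] by blast
      then show False using two_ne two_nu by (simp add: vge_def)
    qed
    then have u1: "1 - fst A \<noteq> 0 \<and> nu (1 - fst A) = 0"
      using not_vge1[OF vge_diff[OF dv one fA]] by blast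
    have u2: "2 * (1 - fst A) \<noteq> 0 \<and> nu (2 * (1 - fst A)) = 0"
      using unit_mult[OF dv two_ne two_nu] u1 by blast
    have u3: "2 * (1 - fst A) + ?t \<noteq> 0 \<and> nu (2 * (1 - fst A) + ?t) = 0"
      using unit_add[OF dv _ _ t] u2 by blast
    have me: "- e \<noteq> 0 \<and> nu (- e) = 0" using e_ne e_nu nu_neg[OF dv e_ne] by simp
    have eq: "enorm e (pp e (0,1) A) = (- e) * (2 * (1 - fst A) + ?t)"
      by (simp add: pp_def enorm_def edefs algebra_simps)
    have l: "(0,1) \<in> pE nu 0" using vge_1[OF dv] by (simp add: pE_iff)
    show ?thesis using unit_mult[OF dv _ _ ] me u3 eq l by metis
  qed
qed

end



context vctx begin

lemma construct:
  assumes k: "M2 A B C D \<in> Kgrp nu e" and u: "u \<noteq> 0" "nu u = 0" and v: "vge nu v 1" and n: "1 \<le> n"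
    and P: "eadd (scal u C) (eneg (scal v B)) \<in> pE nu n" and R: "eadd D (eneg A) \<in> pE nu n"
  shows "\<exists>c\<in>centralizer_K nu e (Xuv u v). \<exists>g\<in>Kfilt nu e n. M2 A B C D = mmul e c g"
proof -
  define w where "w = v * inverse u"
  have iu: "vge nu (inverse u) 0" using vge_inv_unit[OF dv u] .
  have w1: "vge nu w 1" unfolding w_def using vge_mult0'[OF dv v iu] .
  have w0: "vge nu w 0" using vge_mono[OF w1] by simp
  have kU: "M2 A B C D \<in> U11 e" using k by (simp add: Kgrp_def)
  have ent: "A \<in> pE nu 0" "B \<in> pE nu 0" "C \<in> pE nu 0" "D \<in> pE nu 0"
    using k by (auto simp: Kgrp_def entries_in_def OE_pE)
  define Rk where "Rk = eadd D (eneg A)"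
  define P' where "P' = eadd C (eneg (scal w B))"
  have P'eq: "P' = scal (inverse u) (eadd (scal u C) (eneg (scal v B)))"
    using u(1) by (simp add: P'_def w_def scal_def edefs algebra_simps)
  have P'n: "P' \<in> pE nu n" using pE_scal0[OF iu P] P'eq by simp
  have Rn: "Rk \<in> pE nu n" using R Rk_def by simp
  note U = U11_rel[OF kU two_ne]
  define m0 where "m0 = 1 - enorm e A - w * enorm e B"
  define m1 where "m1 = - 2 * fst (emul e (econj A) B)"
  have m0eq: "m0 = (1 - fst (eadd (emul e (econj A) D) (emul e (econj C) B))) + fst (emul e (econj A) Rk) + fst (emul e (econj P') B)"
    by (simp add: m0_def Rk_def P'_def enorm_def edefs scal_def algebra_simps)
  have m0n: "vge nu m0 n"
  proof -
    have "vge nu (fst (emul e (econj A) Rk)) n" using fst_pE[OF pE_mul0[OF pE_conj[OF ent(1)] Rn]] .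
    moreover have "vge nu (fst (emul e (econj P') B)) n" using fst_pE[OF pE_mul0'[OF pE_conj[OF P'n] ent(2)]] .
    ultimately show ?thesis using m0eq U(3) vge_add[OF dv] by (simp add: eone_def)
  qed
  have m1eq: "m1 = 2 * fst (emul e (econj B) Rk) - 2 * fst (emul e (econj B) D)"
    by (simp add: m1_def Rk_def edefs algebra_simps)
  have m1n: "vge nu m1 n"
    using m1eq U(2) vge_mult0[OF dv nu_2 fst_pE[OF pE_mul0[OF pE_conj[OF ent(2)] Rn]]] by simp
  have tA: "vge nu (enorm e A - 1) 1"
  proof -
    have "enorm e A - 1 = - m0 - w * enorm e B" by (simp add: m0_def)
    moreover have "vge nu (- m0) 1" using vge_neg[OF dv vge_mono[OF m0n n]] .
    moreover have "vge nu (w * enorm e B) 1" using vge_mult0'[OF dv w1 enorm_vge[OF ent(2)]] .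
    ultimately show ?thesis using vge_diff[OF dv] by simp
  qed
  obtain l where l: "l \<in> pE nu 0" "enorm e (pp e l A) \<noteq> 0" "nu (enorm e (pp e l A)) = 0"
    using choose_l[OF ent(1) tA] by blast
  define p where "p = pp e l A"
  define q where "q = qq e l B"
  have p0: "p \<in> pE nu 0" unfolding p_def pp_def using l(1) ent(1)
    by (simp add: pE_add pE_mul0 pE_conj)
  have q0: "q \<in> pE nu 0" unfolding q_def qq_def using l(1) ent(2)
    by (simp add: pE_mul0 pE_conj)
  define d where "d = Dn e w p q"
  define T where "T = - 2 * (fst (emul e (econj p) q) * fst (emul e (econj p) q) + e * snd (emul e (econj p) q) * snd (emul e (econj p) q))
          + w * (enorm e q * enorm e q)"
  have dN: "enorm e d = enorm e p * enorm e p + w * T" unfolding d_def T_def by (rule id_N)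
  have T0: "vge nu T 0"
  proof -
    have pq: "emul e (econj p) q \<in> pE nu 0" using pE_mul0[OF pE_conj[OF p0] q0] .
    then have a: "vge nu (fst (emul e (econj p) q)) 0" "vge nu (snd (emul e (econj p) q)) 0" by (auto simp: pE_iff)
    have nq: "vge nu (enorm e q) 0" using enorm_vge[OF q0] .
    have "vge nu (fst (emul e (econj p) q) * fst (emul e (econj p) q) + e * snd (emul e (econj p) q) * snd (emul e (econj p) q)) 0"
      using a vge_add[OF dv] vge_mult0[OF dv] e0 by (metis mult.assoc)
    then show ?thesis unfolding T_def
      using vge_add[OF dv] vge_mult0[OF dv] vge_neg[OF dv] nu_2 w0 nq
      by (metis mult_minus_left)
  qed
  have pu: "enorm e p * enorm e p \<noteq> 0 \<and> nu (enorm e p * enorm e p) = 0"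
    using unit_mult[OF dv] l p_def by metis
  have du: "enorm e d \<noteq> 0 \<and> nu (enorm e d) = 0"
    using unit_add[OF dv _ _ vge_mult0'[OF dv w1 T0]] pu dN by metis
  have d0: "d \<in> pE nu 0" unfolding d_def Dn_def
    using p0 q0 pE_scal0[OF w0] by (simp add: pE_add pE_neg pE_mul0 pE_conj)
  define di where "di = einv e d"
  have di0: "di \<in> pE nu 0" unfolding di_def using einv_pE[OF d0] du by blast
  have ddi: "emul e d di = eone" using einv_mul[of e d] du emul_comm unfolding di_def by metis
  define a where "a = emul e (ra e w p q) di"
  define b where "b = emul e (rb e p q) di"
  have aA: "eadd a (eneg A) \<in> pE nu n"
  proof -
    have "eadd a (eneg A) = emul e (emul e l (eadd (scal m0 (econj p)) (eneg (scal (w * m1) (econj q))))) di"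
      unfolding a_def emul_di[OF ddi] d_def p_def q_def m0_def m1_def id_a ..
    moreover have "eadd (scal m0 (econj p)) (eneg (scal (w * m1) (econj q))) \<in> pE nu n"
      using pE_scal[OF m0n pE_conj[OF p0]] pE_scal[OF vge_mult0[OF dv w0 m1n] pE_conj[OF q0]]
      by (simp add: pE_add pE_neg)
    ultimately show ?thesis using pE_mul0 pE_mul0' l(1) di0 by metis
  qed
  have bB: "eadd b (eneg B) \<in> pE nu n"
  proof -
    have "eadd b (eneg B) = emul e (emul e l (eadd (scal m1 (econj p)) (eneg (scal m0 (econj q))))) di"
      unfolding b_def emul_di[OF ddi] d_def p_def q_def m0_def m1_def id_b ..
    moreover have "eadd (scal m1 (econj p)) (eneg (scal m0 (econj q))) \<in> pE nu n"
      using pE_scal[OF m1n pE_conj[OF p0]] pE_scal[OF m0n pE_conj[OF q0]]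
      by (simp add: pE_add pE_neg)
    ultimately show ?thesis using pE_mul0 pE_mul0' l(1) di0 by metis
  qed
  have a0: "a \<in> pE nu 0"
  proof -
    have "a = eadd (eadd a (eneg A)) A" by (simp add: edefs)
    then show ?thesis using pE_add[OF pE_mono[OF aA] ent(1)] n by simp
  qed
  have b0: "b \<in> pE nu 0"
  proof -
    have "b = eadd (eadd b (eneg B)) B" by (simp add: edefs)
    then show ?thesis using pE_add[OF pE_mono[OF bB] ent(2)] n by simp
  qed
  define c where "c = M2 a b (scal w b) a"
  have cU: "c \<in> U11 e"
  proof -
    have re: "fst (emul e (econj a) b) = 0" unfolding a_def b_def using re_ab id_ra id_rb by blast
    have nd: "enorm e d * enorm e di = 1" using enorm_mul[of e d di] ddi by (simp add: enorm_def eone_def)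
    have "enorm e a + w * enorm e b = (fst (ra e w p q) * fst (ra e w p q) - w * e * snd (rb e p q) * snd (rb e p q)) * enorm e di"
      unfolding a_def b_def enorm_mul using id_ra[of e w p q] id_rb[of e p q]
      by (simp add: enorm_def algebra_simps)
    also have "... = 1" unfolding id_U using nd d_def by simp
    finally show ?thesis unfolding c_def using U11_of[OF re] by simp
  qed
  have cK: "c \<in> Kgrp nu e" using cU a0 b0 pE_scal0[OF w0 b0]
    by (simp add: c_def Kgrp_def entries_in_def OE_pE)
  have cX: "mmul e c (Xuv u v) = mmul e (Xuv u v) c"
  proof -
    have "msub (mmul e (Xuv u v) c) (mmul e c (Xuv u v)) = mzero"
      unfolding c_def Mc_form using u(1) by (simp add: w_def scal_def sq_def edefs mzero_def)
    then show ?thesis using msub_eq_mzero by metis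
  qed
  have cC: "c \<in> centralizer_K nu e (Xuv u v)" using cK cX by (simp add: centralizer_K_def)
  define h where "h = minv e c"
  have hc: "mmul e h c = mI" unfolding h_def using minv_left[OF U11_norm_ne[OF cU]] .
  have ch: "mmul e c h = mI" unfolding h_def using minv_right[OF U11_norm_ne[OF cU]] .
  define g where "g = mmul e h (M2 A B C D)"
  have gU: "g \<in> U11 e" unfolding g_def h_def using U11_mmul[OF U11_minv[OF cU] kU] .
  have kc: "mat_in nu n (msub (M2 A B C D) c)"
  proof -
    have "eadd C (eneg (scal w b)) = eadd P' (eneg (scal w (eadd b (eneg B))))"
      by (simp add: P'_def scal_def edefs algebra_simps)
    then have 1: "eadd C (eneg (scal w b)) \<in> pE nu n"
      using P'n pE_scal0[OF w0 bB] by (simp add: pE_add pE_neg)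
    have "eadd D (eneg a) = eadd Rk (eneg (eadd a (eneg A)))"
      by (simp add: Rk_def edefs algebra_simps)
    then have 2: "eadd D (eneg a) \<in> pE nu n" using Rn aA by (simp add: pE_add pE_neg)
    have 3: "eadd A (eneg a) \<in> pE nu n" using pE_neg[OF aA] by (simp add: edefs algebra_simps)
    have 4: "eadd B (eneg b) \<in> pE nu n" using pE_neg[OF bB] by (simp add: edefs algebra_simps)
    show ?thesis using 1 2 3 4 by (simp add: c_def msub_def mat_in_def entries_in_def)
  qed
  have gI: "mat_in nu n (msub g mI)"
  proof -
    have "msub g mI = mmul e h (msub (M2 A B C D) c)"
      unfolding mmul_msub_right g_def hc ..
    then show ?thesis using mat_mmul0[OF minv_mat[OF cU Kgrp_mat[OF cK]] kc] h_def by simp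
  qed
  have gK: "g \<in> Kfilt nu e n"
  proof (cases g)
    case (M2 x y z t)
    then show ?thesis using gI gU
      by (simp add: Kfilt_def mat_in_def entries_in_def msub_def mI_def edefs)
  qed
  have "mmul e c g = M2 A B C D" unfolding g_def mmul_assoc[symmetric] ch by simp
  then show ?thesis using cC gK by metis
qed

end



theorem lemma5p4:
  fixes nu :: "'a::field \<Rightarrow> int" and e u v :: 'a and s :: real and k :: "'a m2"
  assumes "nonarch_local_field nu"
    and "residue_char_not_2 nu"
    and "nonsquare_unit nu e"
    and "u \<noteq> 0" and "nu u = 0"
    and "v = 0 \<or> nu v > 0"
    and "s > 0"
    and "k \<in> Kgrp nu e"
  shows "msub (mmul e (mmul e (minv e k) (Xuv u v)) k) (Xuv u v) \<in> frak_k_r nu e s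
         \<longleftrightarrow> (\<exists>c \<in> centralizer_K nu e (Xuv u v). \<exists>g \<in> Ks nu e s. k = mmul e c g)"
proof -
  interpret vctx nu e
    using assms(1-3) by unfold_locales (auto simp: nonarch_local_field_def residue_char_not_2_def nonsquare_unit_def)
  have v1: "vge nu v 1" using assms(6) by (auto simp: vge_def)
  have v0: "vge nu v 0" using vge_mono[OF v1] by simp
  have n: "1 \<le> \<lceil>s\<rceil>" using assms(7) by simp
  obtain A B C D where k: "k = M2 A B C D" by (cases k)
  have "msub (mmul e (mmul e (minv e k) (Xuv u v)) k) (Xuv u v) \<in> frak_k_r nu e s
     \<longleftrightarrow> eadd (scal u C) (eneg (scal v B)) \<in> pE nu \<lceil>s\<rceil> \<and> eadd D (eneg A) \<in> pE nu \<lceil>s\<rceil>"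
    using char[OF assms(8) assms(4,5) v0 assms(7)] Mc_iff[OF assms(4,5) v0] k by simp
  also have "... \<longleftrightarrow> (\<exists>c \<in> centralizer_K nu e (Xuv u v). \<exists>g \<in> Ks nu e s. k = mmul e c g)"
  proof
    assume "eadd (scal u C) (eneg (scal v B)) \<in> pE nu \<lceil>s\<rceil> \<and> eadd D (eneg A) \<in> pE nu \<lceil>s\<rceil>"
    then show "\<exists>c \<in> centralizer_K nu e (Xuv u v). \<exists>g \<in> Ks nu e s. k = mmul e c g"
      using construct[of A B C D u v "\<lceil>s\<rceil>"] assms(8) assms(4,5) v1 n k by (simp add: Ks_def)
  next
    assume "\<exists>c \<in> centralizer_K nu e (Xuv u v). \<exists>g \<in> Ks nu e s. k = mmul e c g"
    then obtain c g where c: "c \<in> centralizer_K nu e (Xuv u v)" and g: "g \<in> Kfilt nu e \<lceil>s\<rceil>" and kk: "k = mmul e c g"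
      by (auto simp: Ks_def)
    have "mat_in nu \<lceil>s\<rceil> (msub (mmul e (Xuv u v) k) (mmul e k (Xuv u v)))"
      using backward[OF c g assms(4,5) v0] kk by simp
    then show "eadd (scal u C) (eneg (scal v B)) \<in> pE nu \<lceil>s\<rceil> \<and> eadd D (eneg A) \<in> pE nu \<lceil>s\<rceil>"
      using Mc_iff[OF assms(4,5) v0] k by simp
  qed
  finally show ?thesis .
qed


end
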